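(* For $n\ge1$ let $T_n$ be the number of domino tilings of $C_3\times P_{2n}$. For $n\ge0$ let $t_n$ be the number of domino tilings of the graph obtained from $C_3\times P_{2n+1}$ by deleting one vertex of the end copy $C_3\times\{1\}$. Then $$T_n=T_{n-1}+3t_{n-1}\ (n\ge2),\qquad t_n=T_n+t_{n-1}\ (n\ge1),$$ and $T_n=5T_{n-1}-T_{n-2}$ $(n\ge3)$, $t_n=5t_{n-1}-t_{n-2}$ $(n\ge2)$. Moreover, $$T_n=\frac1{14}\Big[(7+\sqrt{21})\Big(\tfrac{5+\sqrt{21}}2\Big)^n+(7-\sqrt{21})\Big(\tfrac{5-\sqrt{21}}2\Big)^n\Big]\quad(n\ge1),$$ $$t_n=\frac{1}{\sqrt{21}}\Big[\Big(\tfrac{5+\sqrt{21}}2\Big)^{n+1}-\Big(\tfrac{5-\sqrt{21}}2\Big)^{n+1}\Big]\quad(n\ge0).$$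
   Context: $H\times K$ denotes the Cartesian product of graphs. $P_m$ is the path with vertex set $\{1,\dots,m\}$ and $C_3$ is the triangle. A domino tiling of a finite graph is a perfect matching, and the number of domino tilings is the number of perfect matchings. *)

theory Defs
  imports Complex_Main
begin

text \<open>A finite simple graph is given by a vertex set V and a symmetric irreflexive
adjacency relation E.  A perfect matching (domino tiling) is a set of edges
(two-element vertex sets {u,v} with E u v) such that every vertex lies in exactly one of them.\<close>

definition graph_edges :: "'a set \<Rightarrow> ('a \<Rightarrow> 'a \<Rightarrow> bool) \<Rightarrow> 'a set set" where
  "graph_edges V E = {{u, v} | u v. u \<in> V \<and> v \<in> V \<and> E u v}"

definition perfect_matchings :: "'a set \<Rightarrow> ('a \<Rightarrow> 'a \<Rightarrow> bool) \<Rightarrow> 'a set set set" where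
  "perfect_matchings V E =
     {M. M \<subseteq> graph_edges V E \<and> (\<forall>v\<in>V. \<exists>!e. e \<in> M \<and> v \<in> e)}"

definition num_tilings :: "'a set \<Rightarrow> ('a \<Rightarrow> 'a \<Rightarrow> bool) \<Rightarrow> nat" where
  "num_tilings V E = card (perfect_matchings V E)"

definition cart_adj :: "('a \<Rightarrow> 'a \<Rightarrow> bool) \<Rightarrow> ('b \<Rightarrow> 'b \<Rightarrow> bool) \<Rightarrow> 'a \<times> 'b \<Rightarrow> 'a \<times> 'b \<Rightarrow> bool" where
  "cart_adj EH EK x y \<longleftrightarrow>
     (EH (fst x) (fst y) \<and> snd x = snd y) \<or> (fst x = fst y \<and> EK (snd x) (snd y))"

definition C3_verts :: "nat set" where "C3_verts = {0, 1, 2}"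
definition C3_adj :: "nat \<Rightarrow> nat \<Rightarrow> bool" where "C3_adj a b \<longleftrightarrow> a \<noteq> b"

definition P_verts :: "nat \<Rightarrow> nat set" where "P_verts m = {1..m}"
definition P_adj :: "nat \<Rightarrow> nat \<Rightarrow> bool" where "P_adj i j \<longleftrightarrow> i = j + 1 \<or> j = i + 1"

definition T_til :: "nat \<Rightarrow> nat" where
  "T_til n = num_tilings (C3_verts \<times> P_verts (2*n)) (cart_adj C3_adj P_adj)"

definition t_til :: "nat \<Rightarrow> nat" where
  "t_til n = num_tilings (C3_verts \<times> P_verts (2*n+1) - {(0, 1)}) (cart_adj C3_adj P_adj)"

end

theory Submission imports Defs begin

lemma ge_sub: "e \<in> graph_edges V E \<Longrightarrow> e \<subseteq> V"
  unfolding graph_edges_def by auto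

lemma ge_mono: "V \<subseteq> W \<Longrightarrow> graph_edges V E \<subseteq> graph_edges W E"
  unfolding graph_edges_def by blast

lemma pm_fin: "finite V \<Longrightarrow> finite (perfect_matchings V E)"
proof -
  assume f: "finite V"
  have "perfect_matchings V E \<subseteq> Pow (Pow V)"
    unfolding perfect_matchings_def using ge_sub by blast
  then show ?thesis using f by (meson finite_Pow_iff finite_subset)
qed

lemma nt_empty: "num_tilings {} E = 1"
proof -
  have "graph_edges {} E = {}" unfolding graph_edges_def by auto
  then have "perfect_matchings {} E = {{}}" unfolding perfect_matchings_def by auto
  then show ?thesis unfolding num_tilings_def by simp
qed

lemma pm_uniq: "M \<in> perfect_matchings V E \<Longrightarrow> w \<in> V \<Longrightarrow> e1 \<in> M \<Longrightarrow> e2 \<in> M \<Longrightarrow> w \<in> e1 \<Longrightarrow> w \<in> e2 \<Longrightarrow> e1 = e2"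
  unfolding perfect_matchings_def by blast

lemma pm_ex: "M \<in> perfect_matchings V E \<Longrightarrow> w \<in> V \<Longrightarrow> \<exists>e. e \<in> M \<and> w \<in> e"
  unfolding perfect_matchings_def by blast

lemma pm_sub: "M \<in> perfect_matchings V E \<Longrightarrow> M \<subseteq> graph_edges V E"
  unfolding perfect_matchings_def by blast

lemma pmI: "M \<subseteq> graph_edges V E \<Longrightarrow> (\<And>w. w \<in> V \<Longrightarrow> \<exists>e. e \<in> M \<and> w \<in> e)
   \<Longrightarrow> (\<And>w e1 e2. w \<in> V \<Longrightarrow> e1 \<in> M \<Longrightarrow> e2 \<in> M \<Longrightarrow> w \<in> e1 \<Longrightarrow> w \<in> e2 \<Longrightarrow> e1 = e2)
   \<Longrightarrow> M \<in> perfect_matchings V E"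
  unfolding perfect_matchings_def by blast

lemma pm_split:
  assumes fin: "finite V" and v: "v \<in> V" and sym: "\<And>x y. E x y \<Longrightarrow> E y x"
    and irr: "\<And>x. \<not> E x x"
  shows "num_tilings V E = (\<Sum>u\<in>{u\<in>V. E v u}. num_tilings (V - {u,v}) E)"
proof -
  let ?N = "{u\<in>V. E v u}"
  let ?P = "\<lambda>u. insert {u,v} ` perfect_matchings (V-{u,v}) E"
  have sub: "?P u \<subseteq> perfect_matchings V E" if u: "u \<in> ?N" for u
  proof
    fix M' assume "M' \<in> ?P u"
    then obtain M where M: "M \<in> perfect_matchings (V-{u,v}) E" and M': "M' = insert {u,v} M" by blast
    have Msub: "M \<subseteq> graph_edges (V-{u,v}) E" using M by (rule pm_sub)
    have e1: "{u,v} \<in> graph_edges V E" unfolding graph_edges_def using u v by blast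
    have e2: "M \<subseteq> graph_edges V E" using Msub ge_mono[of "V-{u,v}" V E] by blast
    have inM: "e \<subseteq> V - {u,v}" if "e \<in> M" for e using that Msub ge_sub by blast
    show "M' \<in> perfect_matchings V E"
    proof (rule pmI)
      show "M' \<subseteq> graph_edges V E" using e1 e2 M' by blast
      fix w assume w: "w \<in> V"
      show "\<exists>e. e \<in> M' \<and> w \<in> e"
      proof (cases "w \<in> {u,v}")
        case True then show ?thesis using M' by blast
      next
        case False then have "w \<in> V-{u,v}" using w by blast
        then show ?thesis using pm_ex[OF M] M' by blast
      qed
    next
      fix w e1 e2 assume w: "w \<in> V" and h: "e1 \<in> M'" "e2 \<in> M'" "w \<in> e1" "w \<in> e2"
      show "e1 = e2"
      proof (cases "w \<in> {u,v}")
        case True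
        then have "e1 \<notin> M" "e2 \<notin> M" using inM h by blast+
        then show ?thesis using h M' by blast
      next
        case False
        then have "e1 \<in> M" "e2 \<in> M" using h M' by blast+
        then show ?thesis using pm_uniq[OF M, of w e1 e2] False w h by blast
      qed
    qed
  qed
  have eq: "perfect_matchings V E = (\<Union>u\<in>?N. ?P u)"
  proof
    show "(\<Union>u\<in>?N. ?P u) \<subseteq> perfect_matchings V E" using sub by blast
    show "perfect_matchings V E \<subseteq> (\<Union>u\<in>?N. ?P u)"
    proof
      fix M assume M: "M \<in> perfect_matchings V E"
      have Msub: "M \<subseteq> graph_edges V E" using M by (rule pm_sub)
      obtain e where e: "e \<in> M" "v \<in> e" using pm_ex[OF M v] by blast
      have "e \<in> graph_edges V E" using e Msub by blast
      then obtain a b where ab: "e = {a,b}" "a \<in> V" "b \<in> V" "E a b" unfolding graph_edges_def by blast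
      have "\<exists>u. u \<in> V \<and> E v u \<and> e = {u,v}"
      proof (cases "a = v")
        case True then show ?thesis using ab by (intro exI[of _ b]) auto
      next
        case False then have "b = v" using ab e(2) by auto
        then show ?thesis using ab sym by (intro exI[of _ a]) auto
      qed
      then obtain u where u: "u \<in> V" "E v u" "e = {u,v}" by blast
      let ?M0 = "M - {e}"
      have "?M0 \<in> perfect_matchings (V-{u,v}) E"
      proof (rule pmI)
        show "?M0 \<subseteq> graph_edges (V-{u,v}) E"
        proof
          fix e' assume e': "e' \<in> ?M0"
          then have "e' \<in> graph_edges V E" using Msub by blast
          then obtain c d where cd: "e' = {c,d}" "c \<in> V" "d \<in> V" "E c d" unfolding graph_edges_def by blast
          have "x \<notin> e'" if "x \<in> {u,v}" for x
          proof
            assume "x \<in> e'"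
            have "x \<in> V" using that u v by blast
            moreover have "x \<in> e" using that u by blast
            ultimately have "e' = e" using pm_uniq[OF M, of x e' e] e e' \<open>x \<in> e'\<close> by blast
            then show False using e' by blast
          qed
          then have "c \<in> V-{u,v}" "d \<in> V-{u,v}" using cd by auto
          then show "e' \<in> graph_edges (V-{u,v}) E" unfolding graph_edges_def using cd by blast
        qed
      next
        fix w assume w: "w \<in> V-{u,v}"
        then have "w \<notin> e" using u by blast
        then show "\<exists>e'. e' \<in> ?M0 \<and> w \<in> e'" using pm_ex[OF M, of w] w by blast
      next
        fix w e1 e2 assume "w \<in> V-{u,v}" "e1 \<in> ?M0" "e2 \<in> ?M0" "w \<in> e1" "w \<in> e2"
        then show "e1 = e2" using pm_uniq[OF M, of w e1 e2] by blast
      qed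
      moreover have "M = insert {u,v} ?M0" using e u by blast
      ultimately show "M \<in> (\<Union>u\<in>?N. ?P u)" using u by blast
    qed
  qed
  have finN: "finite ?N" using fin by simp
  have finP: "\<forall>u\<in>?N. finite (?P u)" using fin pm_fin by blast
  have disj: "\<forall>u1\<in>?N. \<forall>u2\<in>?N. u1 \<noteq> u2 \<longrightarrow> ?P u1 \<inter> ?P u2 = {}"
  proof (intro ballI impI)
    fix u1 u2 assume u1: "u1 \<in> ?N" and u2: "u2 \<in> ?N" and ne: "u1 \<noteq> u2"
    show "?P u1 \<inter> ?P u2 = {}"
    proof (rule ccontr)
      assume "?P u1 \<inter> ?P u2 \<noteq> {}"
      then obtain M where "M \<in> ?P u1" "M \<in> ?P u2" by blast
      note MM = this
      have M1: "M \<in> perfect_matchings V E" using sub[OF u1] MM(1) by blast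
      have M2: "{u1,v} \<in> M" using MM(1) by blast
      have M3: "{u2,v} \<in> M" using MM(2) by blast
      note M = M1 M2 M3
      then have "{u1,v} = {u2,v}" using pm_uniq[OF M(1) v M(2) M(3)] by blast
      moreover have "u1 \<noteq> v" using u1 irr by blast
      ultimately show False using ne by (metis doubleton_eq_iff)
    qed
  qed
  have inj: "inj_on (insert {u,v}) (perfect_matchings (V-{u,v}) E)" for u
  proof (rule inj_onI)
    fix A B assume A: "A \<in> perfect_matchings (V-{u,v}) E" and B: "B \<in> perfect_matchings (V-{u,v}) E"
      and AB: "insert {u,v} A = insert {u,v} B"
    have "{u,v} \<notin> A" using pm_sub[OF A] ge_sub by blast
    moreover have "{u,v} \<notin> B" using pm_sub[OF B] ge_sub by blast
    ultimately show "A = B" using AB insert_ident by metis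
  qed
  have "num_tilings V E = card (\<Union>u\<in>?N. ?P u)" unfolding num_tilings_def using eq by simp
  also have "\<dots> = (\<Sum>u\<in>?N. card (?P u))" by (rule card_UN_disjoint[OF finN finP disj])
  also have "\<dots> = (\<Sum>u\<in>?N. num_tilings (V - {u,v}) E)"
    unfolding num_tilings_def using inj card_image by (intro sum.cong) auto
  finally show ?thesis .
qed

lemma iso_le:
  assumes fin: "finite V" and inj: "inj_on f V"
    and adj: "\<And>x y. x \<in> V \<Longrightarrow> y \<in> V \<Longrightarrow> E' (f x) (f y) = E x y"
  shows "card (perfect_matchings V E) \<le> card (perfect_matchings (f ` V) E')"
proof (rule card_inj_on_le)
  let ?h = "\<lambda>M. (`) f ` M"
  have "inj_on ((`) f) (Pow V)" using inj inj_on_image_Pow by blast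
  then have "inj_on ?h (Pow (Pow V))" using inj_on_image_Pow by blast
  moreover have "perfect_matchings V E \<subseteq> Pow (Pow V)"
    unfolding perfect_matchings_def using ge_sub by blast
  ultimately show "inj_on ?h (perfect_matchings V E)" by (rule inj_on_subset)
  show "finite (perfect_matchings (f ` V) E')" using fin by (rule pm_fin[OF finite_imageI])
  show "?h ` perfect_matchings V E \<subseteq> perfect_matchings (f ` V) E'"
  proof
    fix M' assume "M' \<in> ?h ` perfect_matchings V E"
    then obtain M where M: "M \<in> perfect_matchings V E" and M': "M' = ?h M" by (rule imageE)
    have Msub: "M \<subseteq> graph_edges V E" using M by (rule pm_sub)
    show "M' \<in> perfect_matchings (f ` V) E'"
    proof (rule pmI)
      show "M' \<subseteq> graph_edges (f ` V) E'"
      proof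
        fix e' assume "e' \<in> M'"
        then obtain e where ee: "e \<in> M" "e' = f ` e" using M' by blast
        then have "e \<in> graph_edges V E" using Msub by blast
        then obtain a b where ab: "e = {a,b}" "a \<in> V" "b \<in> V" "E a b" unfolding graph_edges_def by blast
        have "e' = {f a, f b}" using ee ab by simp
        moreover have "E' (f a) (f b)" using adj ab by simp
        ultimately show "e' \<in> graph_edges (f ` V) E'" using ab unfolding graph_edges_def by blast
      qed
    next
      fix w' assume "w' \<in> f ` V"
      then obtain w where w: "w \<in> V" "w' = f w" by blast
      obtain e where e: "e \<in> M" "w \<in> e" using pm_ex[OF M w(1)] by blast
      show "\<exists>e'. e' \<in> M' \<and> w' \<in> e'" using e w M' by blast
    next
      fix w' e1 e2 assume "w' \<in> f ` V" and h: "e1 \<in> M'" "e2 \<in> M'" "w' \<in> e1" "w' \<in> e2"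
      then obtain w where w: "w \<in> V" "w' = f w" by blast
      obtain d1 where d1: "d1 \<in> M" "e1 = f ` d1" using h M' by blast
      obtain d2 where d2: "d2 \<in> M" "e2 = f ` d2" using h M' by blast
      have s1: "d1 \<subseteq> V" using d1 Msub ge_sub by blast
      have s2: "d2 \<subseteq> V" using d2 Msub ge_sub by blast
      obtain x1 where x1: "x1 \<in> d1" "f x1 = f w" using d1 h w by blast
      obtain x2 where x2: "x2 \<in> d2" "f x2 = f w" using d2 h w by blast
      have "x1 = w" using x1 s1 w inj by (meson inj_onD subsetD)
      moreover have "x2 = w" using x2 s2 w inj by (meson inj_onD subsetD)
      ultimately have "d1 = d2" using pm_uniq[OF M w(1) d1(1) d2(1)] x1 x2 by blast
      then show "e1 = e2" using d1 d2 by simp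
    qed
  qed
qed

lemma iso:
  assumes fin: "finite V" and inj: "inj_on f V"
    and adj: "\<And>x y. x \<in> V \<Longrightarrow> y \<in> V \<Longrightarrow> E' (f x) (f y) = E x y"
  shows "num_tilings (f ` V) E' = num_tilings V E"
proof -
  let ?g = "inv_into V f"
  have 1: "card (perfect_matchings V E) \<le> card (perfect_matchings (f ` V) E')"
    by (rule iso_le[of V f E' E, OF fin inj adj])
  have gi: "inj_on ?g (f ` V)" by (simp add: inj_on_inv_into)
  have gV: "?g ` (f ` V) = V" using inj by (simp add: image_inv_into_cancel)
  have adj2: "E (?g x) (?g y) = E' x y" if "x \<in> f ` V" "y \<in> f ` V" for x y
    using that adj inj by (auto simp: inv_into_f_f)
  have "card (perfect_matchings (f ` V) E') \<le> card (perfect_matchings (?g ` (f ` V)) E)"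
    by (rule iso_le[of "f ` V" ?g E E', OF finite_imageI[OF fin] gi adj2])
  then show ?thesis using 1 gV unfolding num_tilings_def by simp
qed


abbreviation E0 where "E0 \<equiv> cart_adj C3_adj P_adj"

lemma E0_simp[simp]: "E0 (a,b) (c,d) \<longleftrightarrow> (a \<noteq> c \<and> b = d) \<or> (a = c \<and> (b = d+1 \<or> d = b+1))"
  unfolding cart_adj_def C3_adj_def P_adj_def by auto

lemma E0_sym: "E0 x y \<Longrightarrow> E0 y x"
  by (cases x; cases y) auto

lemma E0_irr: "\<not> E0 x x"
  by (cases x) auto

lemma split_E0: "finite V \<Longrightarrow> v \<in> V \<Longrightarrow> num_tilings V E0 = (\<Sum>u\<in>{u\<in>V. E0 v u}. num_tilings (V - {u,v}) E0)"
  using pm_split[of V v E0] E0_sym E0_irr by blast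

lemma split1: "finite V \<Longrightarrow> v \<in> V \<Longrightarrow> {u\<in>V. E0 v u} = {u} \<Longrightarrow> num_tilings V E0 = num_tilings (V - {u,v}) E0"
  using split_E0[of V v] by simp

lemma split2: "finite V \<Longrightarrow> v \<in> V \<Longrightarrow> {u\<in>V. E0 v u} = {u1,u2} \<Longrightarrow> u1 \<noteq> u2 \<Longrightarrow>
   num_tilings V E0 = num_tilings (V - {u1,v}) E0 + num_tilings (V - {u2,v}) E0"
  using split_E0[of V v] by simp

lemma split3: "finite V \<Longrightarrow> v \<in> V \<Longrightarrow> {u\<in>V. E0 v u} = {u1,u2,u3} \<Longrightarrow> u1 \<noteq> u2 \<Longrightarrow> u1 \<noteq> u3 \<Longrightarrow> u2 \<noteq> u3 \<Longrightarrow>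
   num_tilings V E0 = num_tilings (V - {u1,v}) E0 + num_tilings (V - {u2,v}) E0 + num_tilings (V - {u3,v}) E0"
  using split_E0[of V v] by (simp add: add.assoc)

definition gm :: "(nat \<Rightarrow> nat) \<Rightarrow> nat \<Rightarrow> nat \<times> nat \<Rightarrow> nat \<times> nat" where
  "gm \<sigma> d x = (\<sigma> (fst x), snd x + d)"

lemma gm_iso:
  assumes "finite V" "\<And>c. \<sigma> (\<sigma> c) = c"
  shows "num_tilings (gm \<sigma> d ` V) E0 = num_tilings V E0"
proof (rule iso)
  have inj: "inj \<sigma>" using assms(2) by (metis injI)
  show "finite V" by fact
  show "inj_on (gm \<sigma> d) V" unfolding inj_on_def gm_def using inj by (auto dest: injD simp: prod_eq_iff)
  fix x y show "E0 (gm \<sigma> d x) (gm \<sigma> d y) = E0 x y"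
    using inj unfolding gm_def by (cases x; cases y) (auto dest: injD)
qed

lemma gm_img:
  assumes "\<And>c. \<sigma> (\<sigma> c) = c"
  shows "gm \<sigma> d ` A = {(c,j). d \<le> j \<and> (\<sigma> c, j - d) \<in> A}"
proof
  show "gm \<sigma> d ` A \<subseteq> {(c,j). d \<le> j \<and> (\<sigma> c, j - d) \<in> A}"
    using assms unfolding gm_def by auto
  show "{(c,j). d \<le> j \<and> (\<sigma> c, j - d) \<in> A} \<subseteq> gm \<sigma> d ` A"
  proof
    fix x assume "x \<in> {(c,j). d \<le> j \<and> (\<sigma> c, j - d) \<in> A}"
    then obtain c j where x: "x = (c,j)" "d \<le> j" "(\<sigma> c, j - d) \<in> A" by blast
    then have "x = gm \<sigma> d (\<sigma> c, j - d)" using assms unfolding gm_def by simp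
    then show "x \<in> gm \<sigma> d ` A" using x by blast
  qed
qed

definition sw01 :: "nat \<Rightarrow> nat" where "sw01 c = (if c = 0 then 1 else if c = 1 then 0 else c)"
definition sw02 :: "nat \<Rightarrow> nat" where "sw02 c = (if c = 0 then 2 else if c = 2 then 0 else c)"

lemma sw01_inv: "sw01 (sw01 c) = c" unfolding sw01_def by auto
lemma sw02_inv: "sw02 (sw02 c) = c" unfolding sw02_def by auto

definition FF :: "nat \<Rightarrow> (nat \<times> nat) set" where "FF k = {0,1,2} \<times> {1..2*k}"
definition GG :: "nat \<Rightarrow> (nat \<times> nat) set" where "GG k = {0,1,2} \<times> {1..2*k+1} - {(0,1)}"

lemma T_FF: "T_til k = num_tilings (FF k) E0"
  unfolding T_til_def FF_def C3_verts_def P_verts_def ..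
lemma t_GG: "t_til k = num_tilings (GG k) E0"
  unfolding t_til_def GG_def C3_verts_def P_verts_def ..

lemma T_step: "T_til (Suc m) = T_til m + 3 * t_til m"
proof -
  let ?V = "{0,1,2::nat} \<times> {1..2*m+2}"
  have fin: "finite (?V - X)" for X by simp
  have "T_til (Suc m) = num_tilings ?V E0" unfolding T_FF FF_def by simp
  also have "\<dots> = num_tilings (?V - {(1,1),(0,1)}) E0 + num_tilings (?V - {(2,1),(0,1)}) E0
      + num_tilings (?V - {(0,2),(0,1)}) E0"
    by (rule split3) auto
  also have "num_tilings (?V - {(1,1),(0,1)}) E0 = num_tilings (?V - {(1,1),(0,1)} - {(2,2),(2,1)}) E0"
    by (rule split1) auto
  also have "?V - {(1,1),(0,1)} - {(2,2),(2,1)} = gm sw02 1 ` GG m"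
    unfolding gm_img[OF sw02_inv] GG_def by (auto simp: sw02_def split: if_splits)
  also have "num_tilings (?V - {(2,1),(0,1)}) E0 = num_tilings (?V - {(2,1),(0,1)} - {(1,2),(1,1)}) E0"
    by (rule split1) auto
  also have "?V - {(2,1),(0,1)} - {(1,2),(1,1)} = gm sw01 1 ` GG m"
    unfolding gm_img[OF sw01_inv] GG_def by (auto simp: sw01_def split: if_splits)
  also have "num_tilings (?V - {(0,2),(0,1)}) E0 = num_tilings (?V - {(0,2),(0,1)} - {(2,1),(1,1)}) E0
      + num_tilings (?V - {(0,2),(0,1)} - {(1,2),(1,1)}) E0"
    by (rule split2) auto
  also have "?V - {(0,2),(0,1)} - {(2,1),(1,1)} = gm (\<lambda>c. c) 1 ` GG m"
    unfolding gm_img[of "\<lambda>c. c", OF refl] GG_def by auto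
  also have "num_tilings (?V - {(0,2),(0,1)} - {(1,2),(1,1)}) E0 = num_tilings (?V - {(0,2),(0,1)} - {(1,2),(1,1)} - {(2,2),(2,1)}) E0"
    by (rule split1) auto
  also have "?V - {(0,2),(0,1)} - {(1,2),(1,1)} - {(2,2),(2,1)} = gm (\<lambda>c. c) 2 ` FF m"
    unfolding gm_img[of "\<lambda>c. c", OF refl] FF_def by auto
  also have "num_tilings (gm sw02 1 ` GG m) E0 = t_til m"
    unfolding t_GG by (rule gm_iso[OF _ sw02_inv]) (simp add: GG_def)
  also have "num_tilings (gm sw01 1 ` GG m) E0 = t_til m"
    unfolding t_GG by (rule gm_iso[OF _ sw01_inv]) (simp add: GG_def)
  also have "num_tilings (gm (\<lambda>c. c) 1 ` GG m) E0 = t_til m"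
    unfolding t_GG by (rule gm_iso[of _ "\<lambda>c. c", OF _ refl]) (simp add: GG_def)
  also have "num_tilings (gm (\<lambda>c. c) 2 ` FF m) E0 = T_til m"
    unfolding T_FF by (rule gm_iso[of _ "\<lambda>c. c", OF _ refl]) (simp add: FF_def)
  finally show ?thesis by simp
qed

lemma t_step: "t_til (Suc m) = T_til (Suc m) + t_til m"
proof -
  let ?V = "{0,1,2::nat} \<times> {1..2*m+3} - {(0,1)}"
  have fin: "finite (?V - X)" for X by simp
  have e: "2*Suc m + 1 = 2*m+3" by simp
  have "t_til (Suc m) = num_tilings ?V E0" unfolding t_GG GG_def e ..
  also have "\<dots> = num_tilings (?V - {(2,1),(1,1)}) E0 + num_tilings (?V - {(1,2),(1,1)}) E0"
    by (rule split2) auto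
  also have "?V - {(2,1),(1,1)} = gm (\<lambda>c. c) 1 ` FF (Suc m)"
    unfolding gm_img[of "\<lambda>c. c", OF refl] FF_def by auto
  also have "num_tilings (?V - {(1,2),(1,1)}) E0 = num_tilings (?V - {(1,2),(1,1)} - {(2,2),(2,1)}) E0"
    by (rule split1) auto
  also have "num_tilings (?V - {(1,2),(1,1)} - {(2,2),(2,1)}) E0 = num_tilings (?V - {(1,2),(1,1)} - {(2,2),(2,1)} - {(0,3),(0,2)}) E0"
    by (rule split1) auto
  also have "?V - {(1,2),(1,1)} - {(2,2),(2,1)} - {(0,3),(0,2)} = gm (\<lambda>c. c) 2 ` GG m"
    unfolding gm_img[of "\<lambda>c. c", OF refl] GG_def by auto
  also have "num_tilings (gm (\<lambda>c. c) 1 ` FF (Suc m)) E0 = T_til (Suc m)"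
    unfolding T_FF by (rule gm_iso[of _ "\<lambda>c. c", OF _ refl]) (simp add: FF_def)
  also have "num_tilings (gm (\<lambda>c. c) 2 ` GG m) E0 = t_til m"
    unfolding t_GG by (rule gm_iso[of _ "\<lambda>c. c", OF _ refl]) (simp add: GG_def)
  finally show ?thesis by simp
qed

lemma T0: "T_til 0 = 1" unfolding T_FF FF_def by (simp add: nt_empty)
lemma t0: "t_til 0 = 1"
proof -
  have "t_til 0 = num_tilings ({0,1,2::nat} \<times> {1..1::nat} - {(0,1)}) E0" unfolding t_GG GG_def by simp
  also have "\<dots> = num_tilings ({0,1,2::nat} \<times> {1..1::nat} - {(0,1)} - {(2,1),(1,1)}) E0"
    by (rule split1) auto
  also have "{0,1,2::nat} \<times> {1..1::nat} - {(0,1)} - {(2,1),(1,1)} = {}" by auto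
  finally show ?thesis by (simp add: nt_empty)
qed

lemma closed:
  fixes T t :: "nat \<Rightarrow> nat"
  assumes T0: "T 0 = 1" and t0: "t 0 = 1"
    and Ts: "\<And>m. T (Suc m) = T m + 3 * t m" and ts: "\<And>m. t (Suc m) = T (Suc m) + t m"
  shows "real (T n) = 1/14 * ((7 + sqrt 21) * ((5 + sqrt 21)/2)^n + (7 - sqrt 21) * ((5 - sqrt 21)/2)^n)
       \<and> real (t n) = 1 / sqrt 21 * (((5 + sqrt 21)/2)^(n+1) - ((5 - sqrt 21)/2)^(n+1))"
proof -
  define s where "s = sqrt (21::real)"
  define a where "a = (5 + s)/2"
  define b where "b = (5 - s)/2"
  have s2: "s * s = 21" unfolding s_def by simp
  have sp: "s > 0" unfolding s_def by simp
  have A1: "(7+s)/14 * a = (7+s)/14 + 3/s * a"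
    unfolding a_def using sp s2 by (simp add: field_simps)
  have A2: "(7-s)/14 * b = (7-s)/14 - 3/s * b"
    unfolding b_def using sp s2 by (simp add: field_simps)
  have B1: "a/s = (7+s)/14 + 1/s"
    unfolding a_def using sp s2 by (simp add: field_simps)
  have B2: "b/s = 1/s - (7-s)/14"
    unfolding b_def using sp s2 by (simp add: field_simps)
  have "real (T n) = (7+s)/14 * a^n + (7-s)/14 * b^n \<and> real (t n) = (a^(n+1) - b^(n+1))/s"
  proof (induction n)
    case 0
    show ?case using T0 t0 sp unfolding a_def b_def by (simp add: field_simps)
  next
    case (Suc n)
    have IH1: "real (T n) = (7+s)/14 * a^n + (7-s)/14 * b^n" using Suc.IH by blast
    have IH2: "real (t n) = (a^(n+1) - b^(n+1))/s" using Suc.IH by blast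
    have 1: "real (T (Suc n)) = (7+s)/14 * a^(Suc n) + (7-s)/14 * b^(Suc n)"
    proof -
      have "real (T (Suc n)) = real (T n) + 3 * real (t n)" using Ts by simp
      also have "\<dots> = a^n * ((7+s)/14 + 3/s * a) + b^n * ((7-s)/14 - 3/s * b)"
        unfolding IH1 IH2 using sp by (simp add: field_simps)
      also have "\<dots> = a^n * ((7+s)/14 * a) + b^n * ((7-s)/14 * b)" by (simp only: A1 A2)
      finally show ?thesis by (simp add: algebra_simps)
    qed
    have "real (t (Suc n)) = real (T (Suc n)) + real (t n)" using ts by simp
    also have "\<dots> = a^(Suc n) * ((7+s)/14 + 1/s) - b^(Suc n) * (1/s - (7-s)/14)"
      unfolding 1 IH2 using sp by (simp add: field_simps)
    also have "\<dots> = a^(Suc n) * (a/s) - b^(Suc n) * (b/s)" by (simp only: B1 B2)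
    also have "\<dots> = (a^(Suc n+1) - b^(Suc n+1))/s" using sp by (simp add: field_simps)
    finally show ?case using 1 by simp
  qed
  then show ?thesis unfolding s_def a_def b_def by (simp add: field_simps)
qed
theorem theorem8:
  shows "(\<forall>n\<ge>2. T_til n = T_til (n-1) + 3 * t_til (n-1))
       \<and> (\<forall>n\<ge>1. t_til n = T_til n + t_til (n-1))
       \<and> (\<forall>n\<ge>3. int (T_til n) = 5 * int (T_til (n-1)) - int (T_til (n-2)))
       \<and> (\<forall>n\<ge>2. int (t_til n) = 5 * int (t_til (n-1)) - int (t_til (n-2)))
       \<and> (\<forall>n\<ge>1. real (T_til n) = 1/14 * ((7 + sqrt 21) * ((5 + sqrt 21)/2)^n
                                       + (7 - sqrt 21) * ((5 - sqrt 21)/2)^n))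
       \<and> (\<forall>n. real (t_til n) = 1 / sqrt 21 * (((5 + sqrt 21)/2)^(n+1)
                                             - ((5 - sqrt 21)/2)^(n+1)))"
  proof -
  note C = closed[of T_til t_til, OF T0 t0 T_step t_step]
  have r1: "\<forall>n\<ge>2. T_til n = T_til (n-1) + 3 * t_til (n-1)"
  proof (intro allI impI)
    fix n :: nat assume "n \<ge> 2" then obtain m where "n = Suc m" by (cases n) auto
    then show "T_til n = T_til (n-1) + 3 * t_til (n-1)" using T_step by simp
  qed
  have r2: "\<forall>n\<ge>1. t_til n = T_til n + t_til (n-1)"
  proof (intro allI impI)
    fix n :: nat assume "n \<ge> 1" then obtain m where "n = Suc m" by (cases n) auto
    then show "t_til n = T_til n + t_til (n-1)" using t_step by simp
  qed
  have r3: "\<forall>n\<ge>3. int (T_til n) = 5 * int (T_til (n-1)) - int (T_til (n-2))"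
  proof (intro allI impI)
    fix n :: nat assume "n \<ge> 3" then obtain m where m: "n = Suc (Suc m)" by (cases n; cases "n-1") auto
    have "T_til (Suc (Suc m)) = T_til (Suc m) + 3 * t_til (Suc m)" by (rule T_step)
    moreover have "t_til (Suc m) = T_til (Suc m) + t_til m" by (rule t_step)
    moreover have "T_til (Suc m) = T_til m + 3 * t_til m" by (rule T_step)
    ultimately show "int (T_til n) = 5 * int (T_til (n-1)) - int (T_til (n-2))" using m by simp
  qed
  have r4: "\<forall>n\<ge>2. int (t_til n) = 5 * int (t_til (n-1)) - int (t_til (n-2))"
  proof (intro allI impI)
    fix n :: nat assume "n \<ge> 2" then obtain m where m: "n = Suc (Suc m)" by (cases n; cases "n-1") auto
    have "t_til (Suc (Suc m)) = T_til (Suc (Suc m)) + t_til (Suc m)" by (rule t_step)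
    moreover have "T_til (Suc (Suc m)) = T_til (Suc m) + 3 * t_til (Suc m)" by (rule T_step)
    moreover have "t_til (Suc m) = T_til (Suc m) + t_til m" by (rule t_step)
    ultimately show "int (t_til n) = 5 * int (t_til (n-1)) - int (t_til (n-2))" using m by simp
  qed
  have c5: "\<forall>n\<ge>1. real (T_til n) = 1/14 * ((7 + sqrt 21) * ((5 + sqrt 21)/2)^n
                                       + (7 - sqrt 21) * ((5 - sqrt 21)/2)^n)" using C by blast
  have c6: "\<forall>n. real (t_til n) = 1 / sqrt 21 * (((5 + sqrt 21)/2)^(n+1)
                                             - ((5 - sqrt 21)/2)^(n+1))" using C by blast
  show ?thesis using r1 r2 r3 r4 c5 c6 by blast
qed

end
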